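(* Let $Y_1,Y_2\subseteq Y$ and $Z_1,Z_2\subseteq Z$ with $Y_1\cap Y_2=\emptyset$ and $Z_1\cap Z_2=\emptyset$. Let $f\in\mathbb{F}[Y_1,Z_1]$ and $g\in\mathbb{F}[Y_2,Z_2]$. Then $\mathrm{maxrank}(M_{fg})=\mathrm{maxrank}(M_f)\cdot\mathrm{maxrank}(M_g)$.
   Context: $\mathbb{F}$ is a field, $Y=\{y_1,\dots,y_m\}$ and $Z=\{z_1,\dots,z_m\}$ are disjoint sets of variables. For $f\in\mathbb{F}[Y,Z]$, the polynomial coefficient matrix $M_f$ is the $2^m\times 2^m$ matrix with entries in $\mathbb{F}[Y,Z]$, rows indexed by monic multilinear monomials $p$ in $Y$ and columns by monic multilinear monomials $q$ in $Z$, where $M_f(p,q)=G$ if and only if $f$ can be uniquely written as $f=pq\,G+Q$ with $G$ containing no variable other than those present in $p$ and $q$, and $Q$ having no monomial which is divisible by $pq$ and contains only variables present in $p$ and $q$. For $S:Y\cup Z\to\mathbb{F}$, $M_f|_S$ is obtained by evaluating each entry at $S$, and $\mathrm{maxrank}(M_f)=\max_S\mathrm{rank}(M_f|_S)$. *)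

theory Defs
  imports "HOL-Library.Poly_Mapping" "Jordan_Normal_Form.DL_Rank"
begin

text \<open>Variables: Yv i stands for y_(i+1), Zv i stands for z_(i+1).\<close>
datatype var = Yv nat | Zv nat

definition Yset :: "nat \<Rightarrow> var set" where "Yset m = {Yv i | i. i < m}"
definition Zset :: "nat \<Rightarrow> var set" where "Zset m = {Zv i | i. i < m}"

type_synonym 'a mpoly = "(var \<Rightarrow>\<^sub>0 nat) \<Rightarrow>\<^sub>0 'a"

definition vars :: "'a::zero mpoly \<Rightarrow> var set" where
  "vars f = \<Union> (Poly_Mapping.keys ` Poly_Mapping.keys f)"

definition mlmono :: "var set \<Rightarrow> (var \<Rightarrow>\<^sub>0 nat)" where
  "mlmono V = (\<Sum>v\<in>V. Poly_Mapping.single v 1)"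

definition mono_poly :: "var set \<Rightarrow> 'a::{zero,one} mpoly" where
  "mono_poly V = Poly_Mapping.single (mlmono V) 1"

text \<open>Entry M_f(p,q) for p = product of the variables in P (subset of Y) and
  q = product of the variables in Q (subset of Z): the unique G with
  f = pq G + R, vars G within P \<union> Q, and R having no monomial which is divisible
  by pq and contains only variables of P \<union> Q.\<close>
definition coeff_entry :: "'a::comm_ring_1 mpoly \<Rightarrow> var set \<Rightarrow> var set \<Rightarrow> 'a mpoly" where
  "coeff_entry f P Q = (THE G. vars G \<subseteq> P \<union> Q \<and>
     (\<forall>\<mu>\<in>Poly_Mapping.keys (f - mono_poly (P \<union> Q) * G).
        \<not> ((\<exists>\<nu>. \<mu> = mlmono (P \<union> Q) + \<nu>) \<and> Poly_Mapping.keys \<mu> \<subseteq> P \<union> Q)))"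

definition peval :: "(var \<Rightarrow> 'a::comm_ring_1) \<Rightarrow> 'a mpoly \<Rightarrow> 'a" where
  "peval S f = (\<Sum>\<mu>\<in>Poly_Mapping.keys f. Poly_Mapping.lookup f \<mu> * (\<Prod>v\<in>Poly_Mapping.keys \<mu>. S v ^ Poly_Mapping.lookup \<mu> v))"

text \<open>Index i < 2^m encodes the subset {j. bit i j} of {0..<m}; this is a
  bijection between {0..<2^m} and the subsets of {0..<m}.\<close>
definition idx :: "nat \<Rightarrow> nat set" where "idx i = {j. bit i j}"

definition Mf_eval :: "nat \<Rightarrow> 'a::field mpoly \<Rightarrow> (var \<Rightarrow> 'a) \<Rightarrow> 'a mat" where
  "Mf_eval m f S = mat (2^m) (2^m)
     (\<lambda>(i,j). peval S (coeff_entry f (Yv ` idx i) (Zv ` idx j)))"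

definition maxrank :: "nat \<Rightarrow> 'a::field mpoly \<Rightarrow> nat" where
  "maxrank m f = Max {vec_space.rank (2^m) (Mf_eval m f S) | S. True}"

end

theory Submission
  imports Defs
begin


context vec_space begin

lemma rank_LB:
  assumes A: "A \<in> carrier_mat n nc" and J: "J \<subseteq> {..<nc}"
  and ind: "\<And>v. (\<And>i. i < n \<Longrightarrow> (\<Sum>j\<in>J. A $$ (i,j) * v j) = 0) \<Longrightarrow> (\<forall>j\<in>J. v j = 0)"
  shows "card J \<le> rank A"
proof -
  have finJ: "finite J" using J finite_subset by blast
  have inj: "inj_on (col A) J"
  proof (rule inj_onI, rule ccontr)
    fix j j' assume jj: "j \<in> J" "j' \<in> J" "col A j = col A j'" "j \<noteq> j'"
    have jn: "j < nc" "j' < nc" using jj(1,2) J by auto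
    define v where "v = (\<lambda>k. if k = j then (1::'a) else if k = j' then -1 else 0)"
    have "\<forall>k\<in>J. v k = 0"
    proof (rule ind)
      fix i assume i: "i < n"
      have "(\<Sum>k\<in>J. A $$ (i,k) * v k) = (\<Sum>k\<in>{j,j'}. A $$ (i,k) * v k)"
        by (rule sum.mono_neutral_right) (use finJ jj in \<open>auto simp: v_def\<close>)
      also have "\<dots> = A $$ (i,j) - A $$ (i,j')" using jj by (simp add: v_def)
      also have "A $$ (i,j) = col A j $ i" using jn i A by (intro index_col[symmetric]) auto
      also have "A $$ (i,j') = col A j' $ i" using jn i A by (intro index_col[symmetric]) auto
      finally show "(\<Sum>k\<in>J. A $$ (i,k) * v k) = 0" using jj by simp
    qed
    thus False using jj by (auto simp: v_def)
  qed
  define U where "U = col A ` J"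
  have Ucols: "U \<subseteq> set (cols A)" using J A unfolding U_def cols_def by auto
  have Ucar: "U \<subseteq> carrier_vec n" using J A unfolding U_def by auto
  have "lin_indpt U"
  proof
    assume "lin_dep U"
    then have "\<exists>B a w. finite B \<and> B \<subseteq> U \<and> True \<and> lincomb a B = 0\<^sub>v n \<and> w \<in> B \<and> a w \<noteq> 0"
      unfolding lin_dep_def .
    then obtain B a w where B0: "finite B \<and> B \<subseteq> U \<and> True \<and> lincomb a B = 0\<^sub>v n \<and> w \<in> B \<and> a w \<noteq> 0"
      by (elim exE)
    from B0 have B: "finite B" "B \<subseteq> U" "lincomb a B = 0\<^sub>v n" "w \<in> B" "a w \<noteq> 0"
      by simp_all
    define v where "v = (\<lambda>k. if k \<in> J \<and> col A k \<in> B then a (col A k) else 0)"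
    have "\<forall>k\<in>J. v k = 0"
    proof (rule ind)
      fix i assume i: "i < n"
      have "(\<Sum>k\<in>J. A $$ (i,k) * v k) = (\<Sum>k\<in>{k\<in>J. col A k \<in> B}. A $$ (i,k) * v k)"
        by (rule sum.mono_neutral_right) (use finJ in \<open>auto simp: v_def\<close>)
      also have "\<dots> = (\<Sum>k\<in>{k\<in>J. col A k \<in> B}. a (col A k) * col A k $ i)"
      proof (rule sum.cong[OF refl])
        fix k assume k: "k \<in> {k\<in>J. col A k \<in> B}"
        then have kn: "k < nc" using J by auto
        have "col A k $ i = A $$ (i,k)" using kn i A by (intro index_col) auto
        then show "A $$ (i,k) * v k = a (col A k) * col A k $ i" using k unfolding v_def by simp
      qed
      also have "\<dots> = (\<Sum>x\<in>col A ` {k\<in>J. col A k \<in> B}. a x * x $ i)"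
      proof -
        have "inj_on (col A) {k\<in>J. col A k \<in> B}" using inj by (rule inj_on_subset) auto
        then show ?thesis by (simp add: sum.reindex)
      qed
      also have "col A ` {k\<in>J. col A k \<in> B} = B" using B(2) unfolding U_def by auto
      also have "(\<Sum>x\<in>B. a x * x $ i) = lincomb a B $ i"
        by (rule lincomb_index[symmetric]) (use i B(2) Ucar in auto)
      also have "\<dots> = 0" using B(3) i by simp
      finally show "(\<Sum>k\<in>J. A $$ (i,k) * v k) = 0" .
    qed
    moreover obtain k where "k \<in> J" "w = col A k" using B(2,4) unfolding U_def by auto
    ultimately show False using B(4,5) by (auto simp: v_def)
  qed
  then have "card U \<le> rank A" using rank_ge_card_indpt[OF A Ucols] by blast
  moreover have "card U = card J" unfolding U_def using inj by (rule card_image)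
  ultimately show ?thesis by simp
qed

lemma rank_UB:
  assumes A: "A \<in> carrier_mat n nc" and T: "T \<subseteq> {..<nc}"
  and sp: "\<And>j. j < nc \<Longrightarrow> \<exists>\<gamma>. \<forall>i<n. A $$ (i,j) = (\<Sum>t\<in>T. \<gamma> t * A $$ (i,t))"
  shows "rank A \<le> card T"
proof -
  have finT: "finite T" using T finite_subset by blast
  obtain S where S: "maximal S (\<lambda>T. T \<subseteq> set (cols A) \<and> lin_indpt T)"
    using maximal_exists[of "(\<lambda>T. T \<subseteq> set (cols A) \<and> lin_indpt T)" "card (set (cols A))" "{}"]
    by (meson List.finite_set card_mono empty_iff empty_subsetI finite_lin_indpt2 rev_finite_subset)
  have rk: "rank A = card S" using rank_card_indpt[OF A S] .
  have Scols: "S \<subseteq> set (cols A)" and Sli: "lin_indpt S" using S unfolding maximal_def by auto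
  have finS: "finite S" using Scols finite_subset by blast
  define W where "W = col A ` T"
  have Wcar: "W \<subseteq> carrier_vec n" using T A unfolding W_def by auto
  have finW: "finite W" using finT unfolding W_def by simp
  have "S \<subseteq> span W"
  proof
    fix s assume "s \<in> S"
    then obtain j where j: "j < nc" "s = col A j" using Scols A unfolding cols_def by auto
    obtain \<gamma> where g: "\<forall>i<n. A $$ (i,j) = (\<Sum>t\<in>T. \<gamma> t * A $$ (i,t))" using sp[OF j(1)] by blast
    define a where "a = (\<lambda>x. \<Sum>t\<in>{t\<in>T. col A t = x}. \<gamma> t)"
    have "s = lincomb a W"
    proof (rule eq_vecI)
      show "dim_vec s = dim_vec (lincomb a W)" using j A lincomb_dim[OF finW Wcar] by simp
      fix i assume "i < dim_vec (lincomb a W)"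
      then have i: "i < n" using lincomb_dim[OF finW Wcar] by simp
      have "lincomb a W $ i = (\<Sum>x\<in>W. a x * x $ i)" by (rule lincomb_index[OF i Wcar])
      also have "\<dots> = (\<Sum>x\<in>W. \<Sum>t\<in>{t\<in>T. col A t = x}. \<gamma> t * A $$ (i,t))"
        unfolding a_def sum_distrib_right
        by (rule sum.cong[OF refl], rule sum.cong[OF refl]) (use i A T in auto)
      also have "\<dots> = (\<Sum>t\<in>T. \<gamma> t * A $$ (i,t))"
        unfolding W_def by (rule sum.image_gen[symmetric, OF finT])
      also have "\<dots> = s $ i" using g i j A by auto
      finally show "s $ i = lincomb a W $ i" by simp
    qed
    then show "s \<in> span W" using finW by auto
  qed
  from replacement[OF finS finW Wcar Sli this] obtain C where
    C0: "finite C \<and> C \<subseteq> carrier_vec n \<and> C \<subseteq> span W \<and> C \<inter> S = {} \<and> int (card C) \<le> int (card W) - int (card S) \<and> span (S \<union> C) = span W" ..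
  from C0 have C: "int (card C) \<le> int (card W) - int (card S)" by (elim conjE)
  have "card S \<le> card W" using C by linarith
  also have "card W \<le> card T" unfolding W_def by (rule card_image_le[OF finT])
  finally show ?thesis using rk by simp
qed

end


definition cindep :: "'a::field mat \<Rightarrow> nat set \<Rightarrow> bool" where
  "cindep A J \<longleftrightarrow> J \<subseteq> {..<dim_col A} \<and>
     (\<forall>v. (\<forall>i<dim_row A. (\<Sum>j\<in>J. A $$ (i,j) * v j) = 0) \<longrightarrow> (\<forall>j\<in>J. v j = 0))"

definition cspans :: "'a::field mat \<Rightarrow> nat set \<Rightarrow> bool" where
  "cspans A J \<longleftrightarrow> (\<forall>j<dim_col A. \<exists>\<gamma>. \<forall>i<dim_row A. A $$ (i,j) = (\<Sum>t\<in>J. \<gamma> t * A $$ (i,t)))"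

lemma cindepD:
  assumes "cindep A J" "\<And>i. i < dim_row A \<Longrightarrow> (\<Sum>j\<in>J. A $$ (i,j) * v j) = 0" "j \<in> J"
  shows "v j = 0"
  using assms unfolding cindep_def by blast

lemma cindep_le_rank:
  fixes A :: "'a::field mat"
  assumes "cindep A J" shows "card J \<le> vec_space.rank (dim_row A) A"
proof (rule vec_space.rank_LB[where A=A and n="dim_row A" and nc="dim_col A" and J=J])
  show "A \<in> carrier_mat (dim_row A) (dim_col A)" by (intro carrier_matI refl)
  show "J \<subseteq> {..<dim_col A}" using assms unfolding cindep_def by blast
  fix v assume "\<And>i. i < dim_row A \<Longrightarrow> (\<Sum>j\<in>J. A $$ (i, j) * v j) = 0"
  then show "\<forall>j\<in>J. v j = 0" using assms unfolding cindep_def by blast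
qed

lemma rank_le_cspans:
  fixes A :: "'a::field mat"
  assumes "cspans A J" "J \<subseteq> {..<dim_col A}" shows "vec_space.rank (dim_row A) A \<le> card J"
proof (rule vec_space.rank_UB[where A=A and n="dim_row A" and nc="dim_col A" and T=J])
  show "A \<in> carrier_mat (dim_row A) (dim_col A)" by (intro carrier_matI refl)
  show "J \<subseteq> {..<dim_col A}" using assms by blast
  fix j assume "j < dim_col A"
  then show "\<exists>\<gamma>. \<forall>i<dim_row A. A $$ (i, j) = (\<Sum>t\<in>J. \<gamma> t * A $$ (i, t))"
    using assms unfolding cspans_def by blast
qed

lemma char_rank:
  fixes A :: "'a::field mat"
  shows "\<exists>J. cindep A J \<and> cspans A J \<and> card J = vec_space.rank (dim_row A) A"
proof -
  let ?F = "{J. J \<subseteq> {..<dim_col A} \<and> cindep A J}"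
  have "finite ?F" by (rule finite_subset[of _ "Pow {..<dim_col A}"]) auto
  moreover have "{} \<in> ?F" by (auto simp: cindep_def)
  ultimately have "\<exists>J\<in>?F. \<forall>J'\<in>?F. J \<subseteq> J' \<longrightarrow> J = J'"
    by (intro finite_has_maximal) auto
  then obtain J where J: "J \<in> ?F" and mx0: "\<forall>J'\<in>?F. J \<subseteq> J' \<longrightarrow> J = J'" by (elim bexE)
  have mx: "\<And>J'. J' \<in> ?F \<Longrightarrow> J \<subseteq> J' \<Longrightarrow> J = J'" using mx0 by blast
  have Jsub: "J \<subseteq> {..<dim_col A}" and Ji: "cindep A J" using J by auto
  have finJ: "finite J" using Jsub finite_subset by blast
  have sp: "cspans A J"
    unfolding cspans_def
  proof (intro allI impI)
    fix j assume j: "j < dim_col A"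
    show "\<exists>\<gamma>. \<forall>i<dim_row A. A $$ (i,j) = (\<Sum>t\<in>J. \<gamma> t * A $$ (i,t))"
    proof (cases "j \<in> J")
      case True
      show ?thesis
      proof (intro exI allI impI)
        fix i assume "i < dim_row A"
        have "(\<Sum>t\<in>J. (if t = j then 1 else 0) * A $$ (i,t)) = (\<Sum>t\<in>{j}. (if t = j then 1 else 0) * A $$ (i,t))"
          by (rule sum.mono_neutral_right) (use finJ True in auto)
        then show "A $$ (i,j) = (\<Sum>t\<in>J. (if t = j then 1 else 0) * A $$ (i,t))" by simp
      qed
    next
      case False
      have "insert j J \<notin> ?F" using mx[of "insert j J"] False by blast
      moreover have ins: "insert j J \<subseteq> {..<dim_col A}" using Jsub j by auto
      ultimately have "\<not> cindep A (insert j J)" by blast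
      then have "\<exists>v. (\<forall>i<dim_row A. (\<Sum>t\<in>insert j J. A $$ (i,t) * v t) = 0) \<and> \<not> (\<forall>t\<in>insert j J. v t = 0)"
        using ins unfolding cindep_def by blast
      then obtain v where v0: "\<forall>i<dim_row A. (\<Sum>t\<in>insert j J. A $$ (i,t) * v t) = 0"
        and vnz: "\<not> (\<forall>t\<in>insert j J. v t = 0)"
        by blast
      have vsplit: "\<And>i. i < dim_row A \<Longrightarrow> A $$ (i,j) * v j + (\<Sum>t\<in>J. A $$ (i,t) * v t) = 0"
        using v0 False finJ by simp
      have vj: "v j \<noteq> 0"
      proof
        assume "v j = 0"
        then have "\<forall>i<dim_row A. (\<Sum>t\<in>J. A $$ (i,t) * v t) = 0" using vsplit by simp
        then have "\<forall>t\<in>J. v t = 0" using Ji unfolding cindep_def by blast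
        then show False using vnz \<open>v j = 0\<close> by auto
      qed
      show ?thesis
      proof (intro exI allI impI)
        fix i assume i: "i < dim_row A"
        have "(\<Sum>t\<in>J. (- v t / v j) * A $$ (i,t)) = - (\<Sum>t\<in>J. A $$ (i,t) * v t) / v j"
          by (simp add: sum_divide_distrib sum_negf mult.commute)
        also have "(\<Sum>t\<in>J. A $$ (i,t) * v t) = - (A $$ (i,j) * v j)" using vsplit[OF i] by (simp add: eq_neg_iff_add_eq_0 add.commute)
        finally show "A $$ (i,j) = (\<Sum>t\<in>J. (- v t / v j) * A $$ (i,t))" using vj by simp
      qed
    qed
  qed
  have "card J \<le> vec_space.rank (dim_row A) A" by (rule cindep_le_rank[OF Ji])
  moreover have "vec_space.rank (dim_row A) A \<le> card J" by (rule rank_le_cspans[OF sp Jsub])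
  ultimately show ?thesis using Ji sp by (intro exI[of _ J]) auto
qed



lemma kron_rank:
  fixes A B C :: "'a::field mat"
  assumes dA: "A \<in> carrier_mat N N" and dB: "B \<in> carrier_mat N N" and dC: "C \<in> carrier_mat N N"
  and Az: "\<And>i j. i<N \<Longrightarrow> j<N \<Longrightarrow> A$$(i,j) \<noteq> 0 \<Longrightarrow> Ra i \<and> Ka j"
  and Bz: "\<And>i j. i<N \<Longrightarrow> j<N \<Longrightarrow> B$$(i,j) \<noteq> 0 \<Longrightarrow> Rb i \<and> Kb j"
  and Cf: "\<And>i j. i<N \<Longrightarrow> j<N \<Longrightarrow> C$$(i,j) = (if RC i \<and> CC j then A$$(pa i, qa j) * B$$(pb i, qb j) else 0)"
  and pq: "\<And>i. i<N \<Longrightarrow> pa i < N \<and> pb i < N \<and> qa i < N \<and> qb i < N"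
  and cm: "\<And>a b. a<N \<Longrightarrow> b<N \<Longrightarrow> Ka a \<Longrightarrow> Kb b \<Longrightarrow> cmb a b < N \<and> CC (cmb a b) \<and> qa (cmb a b) = a \<and> qb (cmb a b) = b"
  and rm: "\<And>a b. a<N \<Longrightarrow> b<N \<Longrightarrow> Ra a \<Longrightarrow> Rb b \<Longrightarrow> rmb a b < N \<and> RC (rmb a b) \<and> pa (rmb a b) = a \<and> pb (rmb a b) = b"
  shows "vec_space.rank N C = vec_space.rank N A * vec_space.rank N B"
proof -
  have rA: "dim_row A = N" "dim_col A = N" using dA by auto
  have rB: "dim_row B = N" "dim_col B = N" using dB by auto
  have rC: "dim_row C = N" "dim_col C = N" using dC by auto
  obtain JA where JAi: "cindep A JA" and JAs: "cspans A JA" and JAc: "card JA = vec_space.rank N A"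
    using char_rank[of A] rA by auto
  obtain JB where JBi: "cindep B JB" and JBs: "cspans B JB" and JBc: "card JB = vec_space.rank N B"
    using char_rank[of B] rB by auto
  have JAN: "JA \<subseteq> {..<N}" using JAi rA unfolding cindep_def by auto
  have JBN: "JB \<subseteq> {..<N}" using JBi rB unfolding cindep_def by auto
  have finA: "finite JA" using JAN finite_subset by blast
  have finB: "finite JB" using JBN finite_subset by blast
  have KA: "Ka a" if a: "a \<in> JA" for a
  proof (rule ccontr)
    assume nK: "\<not> Ka a"
    have aN: "a < N" using a JAN by auto
    have "(if a = a then (1::'a) else 0) = 0"
    proof (rule cindepD[OF JAi _ a, where v="\<lambda>t. if t = a then 1 else 0"])
      fix i assume "i < dim_row A"
      then have i: "i < N" using rA by simp
      have "(\<Sum>t\<in>JA. A $$ (i,t) * (if t = a then 1 else 0)) = (\<Sum>t\<in>{a}. A $$ (i,t) * (if t = a then 1 else 0))"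
        by (rule sum.mono_neutral_right) (use finA a in auto)
      also have "\<dots> = A $$ (i,a)" by simp
      also have "\<dots> = 0" using Az[OF i aN] nK by blast
      finally show "(\<Sum>t\<in>JA. A $$ (i,t) * (if t = a then 1 else 0)) = 0" .
    qed
    then show False by simp
  qed
  have KB: "Kb b" if b: "b \<in> JB" for b
  proof (rule ccontr)
    assume nK: "\<not> Kb b"
    have bN: "b < N" using b JBN by auto
    have "(if b = b then (1::'a) else 0) = 0"
    proof (rule cindepD[OF JBi _ b, where v="\<lambda>t. if t = b then 1 else 0"])
      fix i assume "i < dim_row B"
      then have i: "i < N" using rB by simp
      have "(\<Sum>t\<in>JB. B $$ (i,t) * (if t = b then 1 else 0)) = (\<Sum>t\<in>{b}. B $$ (i,t) * (if t = b then 1 else 0))"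
        by (rule sum.mono_neutral_right) (use finB b in auto)
      also have "\<dots> = B $$ (i,b)" by simp
      also have "\<dots> = 0" using Bz[OF i bN] nK by blast
      finally show "(\<Sum>t\<in>JB. B $$ (i,t) * (if t = b then 1 else 0)) = 0" .
    qed
    then show False by simp
  qed
  have cmJ: "cmb a b < N \<and> CC (cmb a b) \<and> qa (cmb a b) = a \<and> qb (cmb a b) = b"
    if "a \<in> JA" "b \<in> JB" for a b
    using cm[of a b] that JAN JBN KA KB by auto
  define JC where "JC = (\<lambda>(a,b). cmb a b) ` (JA \<times> JB)"
  have inj: "inj_on (\<lambda>(a,b). cmb a b) (JA \<times> JB)"
  proof (rule inj_onI, clarify)
    fix a b a' b' assume h: "a \<in> JA" "b \<in> JB" "a' \<in> JA" "b' \<in> JB" "cmb a b = cmb a' b'"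
    then have "qa (cmb a b) = qa (cmb a' b')" "qb (cmb a b) = qb (cmb a' b')" by simp_all
    then show "a = a' \<and> b = b'" using cmJ[OF h(1,2)] cmJ[OF h(3,4)] by simp
  qed
  have cardC: "card JC = card JA * card JB"
    unfolding JC_def by (simp add: card_image[OF inj] card_cartesian_product)
  have JCN: "JC \<subseteq> {..<N}" unfolding JC_def using cmJ by auto
  have sumJC: "(\<Sum>t\<in>JC. g t) = (\<Sum>a\<in>JA. \<Sum>b\<in>JB. g (cmb a b))" for g :: "nat \<Rightarrow> 'a"
  proof -
    have "(\<Sum>t\<in>JC. g t) = (\<Sum>x\<in>JA \<times> JB. g ((\<lambda>(a,b). cmb a b) x))"
      unfolding JC_def by (rule sum.reindex[OF inj, unfolded comp_def])
    also have "\<dots> = (\<Sum>a\<in>JA. \<Sum>b\<in>JB. g (cmb a b))"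
      by (simp add: sum.cartesian_product split_def)
    finally show ?thesis .
  qed
  have Cval: "C $$ (i, cmb a b) = A $$ (pa i, a) * B $$ (pb i, b)" if "i < N" "RC i" "a \<in> JA" "b \<in> JB" for i a b
    using Cf[of i "cmb a b"] cmJ[OF that(3,4)] that(1,2) by simp
  have "cindep C JC"
    unfolding cindep_def rC
  proof (intro conjI allI impI)
    show "JC \<subseteq> {..<N}" by (rule JCN)
    fix v assume hv: "\<forall>i<N. (\<Sum>t\<in>JC. C $$ (i,t) * v t) = 0"
    define w where "w a b = v (cmb a b)" for a b
    have h1: "(\<Sum>a\<in>JA. A $$ (i1,a) * (\<Sum>b\<in>JB. B $$ (i2,b) * w a b)) = 0" if i12: "i1 < N" "i2 < N" for i1 i2
    proof (cases "Ra i1 \<and> Rb i2")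
      case True
      let ?i = "rmb i1 i2"
      have ri: "?i < N" "RC ?i" "pa ?i = i1" "pb ?i = i2" using rm[OF i12] True by auto
      have "0 = (\<Sum>t\<in>JC. C $$ (?i,t) * v t)" using hv ri(1) by simp
      also have "\<dots> = (\<Sum>a\<in>JA. \<Sum>b\<in>JB. C $$ (?i, cmb a b) * v (cmb a b))" by (rule sumJC)
      also have "\<dots> = (\<Sum>a\<in>JA. \<Sum>b\<in>JB. A $$ (i1,a) * (B $$ (i2,b) * w a b))"
        by (intro sum.cong refl) (simp add: Cval[OF ri(1,2)] ri w_def)
      also have "\<dots> = (\<Sum>a\<in>JA. A $$ (i1,a) * (\<Sum>b\<in>JB. B $$ (i2,b) * w a b))"
        by (simp add: sum_distrib_left)
      finally show ?thesis by simp
    next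
      case False
      then have "\<not> Ra i1 \<or> \<not> Rb i2" by blast
      then show ?thesis
      proof
        assume n1: "\<not> Ra i1"
        have "A $$ (i1,a) = 0" if "a \<in> JA" for a using Az[of i1 a] n1 i12 that JAN by auto
        then show ?thesis by simp
      next
        assume n2: "\<not> Rb i2"
        have "B $$ (i2,b) = 0" if "b \<in> JB" for b using Bz[of i2 b] n2 i12 that JBN by auto
        then show ?thesis by simp
      qed
    qed
    have h2: "(\<Sum>b\<in>JB. B $$ (i2,b) * w a b) = 0" if "i2 < N" "a \<in> JA" for i2 a
    proof -
      show ?thesis
      proof (rule cindepD[OF JAi _ that(2), where v="\<lambda>a. \<Sum>b\<in>JB. B $$ (i2,b) * w a b"])
        fix i1 assume "i1 < dim_row A"
        then show "(\<Sum>a\<in>JA. A $$ (i1,a) * (\<Sum>b\<in>JB. B $$ (i2,b) * w a b)) = 0"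
          using h1 rA that(1) by simp
      qed
    qed
    have h3: "w a b = 0" if "a \<in> JA" "b \<in> JB" for a b
    proof -
      show ?thesis
      proof (rule cindepD[OF JBi _ that(2), where v="w a"])
        fix i2 assume "i2 < dim_row B"
        then show "(\<Sum>b\<in>JB. B $$ (i2,b) * w a b) = 0" using h2 rB that(1) by simp
      qed
    qed
    show "\<forall>t\<in>JC. v t = 0" unfolding JC_def using h3 by (auto simp: w_def)
  qed
  then have le1: "card JC \<le> vec_space.rank N C" using cindep_le_rank[of C JC] rC by simp
  have "cspans C JC"
    unfolding cspans_def rC
  proof (intro allI impI)
    fix j assume j: "j < N"
    show "\<exists>\<gamma>. \<forall>i<N. C $$ (i,j) = (\<Sum>t\<in>JC. \<gamma> t * C $$ (i,t))"
    proof (cases "CC j")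
      case False
      show ?thesis
      proof (intro exI[of _ "\<lambda>_. 0"] allI impI)
        fix i assume "i < N" then show "C $$ (i,j) = (\<Sum>t\<in>JC. 0 * C $$ (i,t))" using Cf[of i j] j False by simp
      qed
    next
      case True
      have q: "qa j < N" "qb j < N" using pq[OF j] by auto
      obtain g1 where g1: "\<forall>i<N. A $$ (i, qa j) = (\<Sum>t\<in>JA. g1 t * A $$ (i,t))"
        using JAs q rA unfolding cspans_def by auto
      obtain g2 where g2: "\<forall>i<N. B $$ (i, qb j) = (\<Sum>t\<in>JB. g2 t * B $$ (i,t))"
        using JBs q rB unfolding cspans_def by auto
      show ?thesis
      proof (intro exI[of _ "\<lambda>t. g1 (qa t) * g2 (qb t)"] allI impI)
        fix i assume i: "i < N"
        show "C $$ (i,j) = (\<Sum>t\<in>JC. g1 (qa t) * g2 (qb t) * C $$ (i,t))"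
        proof (cases "RC i")
          case False
          have "C $$ (i,t) = 0" if "t \<in> JC" for t using Cf[of i t] i False that JCN by auto
          then show ?thesis using Cf[of i j] i j False by simp
        next
          case RCi: True
          have pi: "pa i < N" "pb i < N" using pq[OF i] by auto
          have "C $$ (i,j) = A $$ (pa i, qa j) * B $$ (pb i, qb j)" using Cf[of i j] i j True RCi by simp
          also have "\<dots> = (\<Sum>a\<in>JA. g1 a * A $$ (pa i,a)) * (\<Sum>b\<in>JB. g2 b * B $$ (pb i,b))"
            using g1 g2 pi by simp
          also have "\<dots> = (\<Sum>a\<in>JA. \<Sum>b\<in>JB. (g1 a * A $$ (pa i,a)) * (g2 b * B $$ (pb i,b)))"
            by (rule sum_product)
          also have "\<dots> = (\<Sum>a\<in>JA. \<Sum>b\<in>JB. g1 (qa (cmb a b)) * g2 (qb (cmb a b)) * C $$ (i, cmb a b))"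
            by (intro sum.cong refl) (simp add: Cval[OF i RCi] cmJ)
          also have "\<dots> = (\<Sum>t\<in>JC. g1 (qa t) * g2 (qb t) * C $$ (i,t))" by (rule sumJC[symmetric])
          finally show ?thesis .
        qed
      qed
    qed
  qed
  then have le2: "vec_space.rank N C \<le> card JC" using rank_le_cspans[of C JC] rC JCN by simp
  show ?thesis using le1 le2 cardC JAc JBc by simp
qed



definition mon :: "(var \<Rightarrow> 'a::comm_ring_1) \<Rightarrow> (var \<Rightarrow>\<^sub>0 nat) \<Rightarrow> 'a" where
  "mon S \<mu> = (\<Prod>v\<in>Poly_Mapping.keys \<mu>. S v ^ Poly_Mapping.lookup \<mu> v)"

definition Lf :: "((var \<Rightarrow>\<^sub>0 nat) \<Rightarrow> 'a) \<Rightarrow> 'a::comm_ring_1 mpoly \<Rightarrow> 'a" where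
  "Lf h p = (\<Sum>\<mu>\<in>Poly_Mapping.keys p. Poly_Mapping.lookup p \<mu> * h \<mu>)"

lemma Lf_superset:
  assumes "finite X" "Poly_Mapping.keys p \<subseteq> X"
  shows "Lf h p = (\<Sum>\<mu>\<in>X. Poly_Mapping.lookup p \<mu> * h \<mu>)"
  unfolding Lf_def by (rule sum.mono_neutral_left) (use assms in \<open>auto simp: in_keys_iff\<close>)

lemma Lf_add: "Lf h (p + q) = Lf h p + Lf h q"
proof -
  let ?X = "Poly_Mapping.keys p \<union> Poly_Mapping.keys q"
  have "Lf h (p + q) = (\<Sum>\<mu>\<in>?X. Poly_Mapping.lookup (p+q) \<mu> * h \<mu>)"
    by (rule Lf_superset) (use keys_add[of p q] in auto)
  also have "\<dots> = (\<Sum>\<mu>\<in>?X. Poly_Mapping.lookup p \<mu> * h \<mu>) + (\<Sum>\<mu>\<in>?X. Poly_Mapping.lookup q \<mu> * h \<mu>)"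
    by (simp add: lookup_add distrib_right sum.distrib)
  also have "(\<Sum>\<mu>\<in>?X. Poly_Mapping.lookup p \<mu> * h \<mu>) = Lf h p" by (rule Lf_superset[symmetric]) auto
  also have "(\<Sum>\<mu>\<in>?X. Poly_Mapping.lookup q \<mu> * h \<mu>) = Lf h q" by (rule Lf_superset[symmetric]) auto
  finally show ?thesis .
qed

lemma Lf_zero: "Lf h 0 = 0" by (simp add: Lf_def)

lemma Lf_sum: "finite I \<Longrightarrow> Lf h (\<Sum>i\<in>I. p i) = (\<Sum>i\<in>I. Lf h (p i))"
  by (induction I rule: finite_induct) (simp_all add: Lf_zero Lf_add)

lemma Lf_single: "Lf h (Poly_Mapping.single \<mu> c) = c * h \<mu>"
  by (simp add: Lf_def)

lemma poly_expand: "p = (\<Sum>\<mu>\<in>Poly_Mapping.keys p. Poly_Mapping.single \<mu> (Poly_Mapping.lookup p \<mu>))"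
proof (rule poly_mapping_eqI)
  fix k
  have "Poly_Mapping.lookup (\<Sum>\<mu>\<in>Poly_Mapping.keys p. Poly_Mapping.single \<mu> (Poly_Mapping.lookup p \<mu>)) k
      = (\<Sum>\<mu>\<in>Poly_Mapping.keys p. if \<mu> = k then Poly_Mapping.lookup p \<mu> else 0)"
    by (simp add: lookup_sum lookup_single when_def)
  also have "\<dots> = Poly_Mapping.lookup p k" by (simp add: sum.delta in_keys_iff)
  finally show "Poly_Mapping.lookup p k = Poly_Mapping.lookup (\<Sum>\<mu>\<in>Poly_Mapping.keys p. Poly_Mapping.single \<mu> (Poly_Mapping.lookup p \<mu>)) k" by simp
qed

lemma Lf_mult:
  "Lf h (f * g) = (\<Sum>a\<in>Poly_Mapping.keys f. \<Sum>b\<in>Poly_Mapping.keys g.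
      Poly_Mapping.lookup f a * Poly_Mapping.lookup g b * h (a + b))"
proof -
  have "f * g = (\<Sum>a\<in>Poly_Mapping.keys f. Poly_Mapping.single a (Poly_Mapping.lookup f a)) *
                (\<Sum>b\<in>Poly_Mapping.keys g. Poly_Mapping.single b (Poly_Mapping.lookup g b))"
    using poly_expand[of f] poly_expand[of g] by simp
  also have "\<dots> = (\<Sum>a\<in>Poly_Mapping.keys f. \<Sum>b\<in>Poly_Mapping.keys g.
       Poly_Mapping.single (a + b) (Poly_Mapping.lookup f a * Poly_Mapping.lookup g b))"
    by (simp add: sum_product mult_single)
  finally show ?thesis by (simp add: Lf_sum Lf_single)
qed

lemma keys_add_nat: "Poly_Mapping.keys (a + b) = Poly_Mapping.keys a \<union> Poly_Mapping.keys (b :: var \<Rightarrow>\<^sub>0 nat)"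
  by (auto simp: in_keys_iff lookup_add)

lemma mon_superset:
  assumes "finite X" "Poly_Mapping.keys \<mu> \<subseteq> X"
  shows "mon S \<mu> = (\<Prod>v\<in>X. S v ^ Poly_Mapping.lookup \<mu> v)"
  unfolding mon_def by (rule prod.mono_neutral_left) (use assms in \<open>auto simp: in_keys_iff\<close>)

lemma mon_add: "mon S (a + b) = mon S a * mon S b"
proof -
  let ?X = "Poly_Mapping.keys a \<union> Poly_Mapping.keys b"
  have "mon S (a + b) = (\<Prod>v\<in>?X. S v ^ Poly_Mapping.lookup (a + b) v)"
    by (rule mon_superset) (auto simp: keys_add_nat)
  also have "\<dots> = (\<Prod>v\<in>?X. S v ^ Poly_Mapping.lookup a v) * (\<Prod>v\<in>?X. S v ^ Poly_Mapping.lookup b v)"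
    by (simp add: lookup_add power_add prod.distrib)
  also have "(\<Prod>v\<in>?X. S v ^ Poly_Mapping.lookup a v) = mon S a" by (rule mon_superset[symmetric]) auto
  also have "(\<Prod>v\<in>?X. S v ^ Poly_Mapping.lookup b v) = mon S b" by (rule mon_superset[symmetric]) auto
  finally show ?thesis .
qed

lemma lookup_mlmono: "finite W \<Longrightarrow> Poly_Mapping.lookup (mlmono W) v = (if v \<in> W then 1 else 0)"
  unfolding mlmono_def by (simp add: lookup_sum lookup_single when_def sum.delta')

lemma keys_mlmono: "finite W \<Longrightarrow> Poly_Mapping.keys (mlmono W) = W"
  by (auto simp: in_keys_iff lookup_mlmono split: if_splits)

lemma lookup_minus_nat: "Poly_Mapping.lookup (a - b) v = Poly_Mapping.lookup a v - Poly_Mapping.lookup (b :: var \<Rightarrow>\<^sub>0 nat) v"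
  by (rule lookup_minus)

lemma lookup_single_mult:
  "Poly_Mapping.lookup (Poly_Mapping.single k (1::'a::comm_ring_1) * G) (k + x) = Poly_Mapping.lookup (G :: 'a mpoly) x"
proof -
  have "Poly_Mapping.single k 1 * G = (\<Sum>\<nu>\<in>Poly_Mapping.keys G. Poly_Mapping.single (k + \<nu>) (Poly_Mapping.lookup G \<nu>))"
    by (subst poly_expand[of G]) (simp add: sum_distrib_left mult_single)
  then have "Poly_Mapping.lookup (Poly_Mapping.single k 1 * G) (k + x) =
     (\<Sum>\<nu>\<in>Poly_Mapping.keys G. if \<nu> = x then Poly_Mapping.lookup G \<nu> else 0)"
    by (simp add: lookup_sum lookup_single when_def)
  also have "\<dots> = Poly_Mapping.lookup G x" by (simp add: sum.delta in_keys_iff)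
  finally show ?thesis .
qed



definition hW :: "(var \<Rightarrow> 'a::comm_ring_1) \<Rightarrow> var set \<Rightarrow> (var \<Rightarrow>\<^sub>0 nat) \<Rightarrow> 'a" where
  "hW S W \<mu> = (if Poly_Mapping.keys \<mu> = W then mon S (\<mu> - mlmono W) else 0)"

definition G0 :: "'a::comm_ring_1 mpoly \<Rightarrow> var set \<Rightarrow> 'a mpoly" where
  "G0 f W = Abs_poly_mapping (\<lambda>\<nu>. if Poly_Mapping.keys \<nu> \<subseteq> W then Poly_Mapping.lookup f (mlmono W + \<nu>) else 0)"

lemma lookup_G0:
  "Poly_Mapping.lookup (G0 f W) \<nu> = (if Poly_Mapping.keys \<nu> \<subseteq> W then Poly_Mapping.lookup f (mlmono W + \<nu>) else 0)"
proof -
  have "{\<nu>. (if Poly_Mapping.keys \<nu> \<subseteq> W then Poly_Mapping.lookup f (mlmono W + \<nu>) else 0) \<noteq> 0}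
      \<subseteq> (\<lambda>\<mu>. \<mu> - mlmono W) ` Poly_Mapping.keys f"
  proof
    fix \<nu> assume "\<nu> \<in> {\<nu>. (if Poly_Mapping.keys \<nu> \<subseteq> W then Poly_Mapping.lookup f (mlmono W + \<nu>) else 0) \<noteq> 0}"
    then have "mlmono W + \<nu> \<in> Poly_Mapping.keys f" by (auto simp: in_keys_iff split: if_splits)
    moreover have "\<nu> = (mlmono W + \<nu>) - mlmono W" by simp
    ultimately show "\<nu> \<in> (\<lambda>\<mu>. \<mu> - mlmono W) ` Poly_Mapping.keys f" by blast
  qed
  then have "finite {\<nu>. (if Poly_Mapping.keys \<nu> \<subseteq> W then Poly_Mapping.lookup f (mlmono W + \<nu>) else 0) \<noteq> 0}"
    by (rule finite_subset) simp
  then show ?thesis unfolding G0_def by simp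
qed

lemma keys_mlmono_add: "finite W \<Longrightarrow> Poly_Mapping.keys (mlmono W + \<nu>) = W \<union> Poly_Mapping.keys \<nu>"
  by (simp add: keys_add_nat keys_mlmono)

definition CEprop :: "'a::comm_ring_1 mpoly \<Rightarrow> var set \<Rightarrow> 'a mpoly \<Rightarrow> bool" where
  "CEprop f W G \<longleftrightarrow> vars G \<subseteq> W \<and>
     (\<forall>\<mu>\<in>Poly_Mapping.keys (f - mono_poly W * G).
        \<not> ((\<exists>\<nu>. \<mu> = mlmono W + \<nu>) \<and> Poly_Mapping.keys \<mu> \<subseteq> W))"

lemma coeff_entry_CE: "coeff_entry f P Q = (THE G. CEprop f (P \<union> Q) G)"
  unfolding coeff_entry_def CEprop_def ..

lemma lookup_mono_mult: "Poly_Mapping.lookup (mono_poly W * (G :: 'a::comm_ring_1 mpoly)) (mlmono W + \<nu>) = Poly_Mapping.lookup G \<nu>"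
  unfolding mono_poly_def by (rule lookup_single_mult)

lemma CE_unique:
  assumes W: "finite W" and P: "CEprop f W G"
  shows "G = G0 f W"
proof (rule poly_mapping_eqI)
  fix \<nu>
  show "Poly_Mapping.lookup G \<nu> = Poly_Mapping.lookup (G0 f W) \<nu>"
  proof (cases "Poly_Mapping.keys \<nu> \<subseteq> W")
    case True
    let ?\<mu> = "mlmono W + \<nu>"
    have "Poly_Mapping.keys ?\<mu> \<subseteq> W" using True W by (simp add: keys_mlmono_add)
    then have "?\<mu> \<notin> Poly_Mapping.keys (f - mono_poly W * G)" using P unfolding CEprop_def by blast
    then have "Poly_Mapping.lookup f ?\<mu> - Poly_Mapping.lookup G \<nu> = 0"
      by (simp add: in_keys_iff lookup_minus lookup_mono_mult)
    then show ?thesis using True by (simp add: lookup_G0)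
  next
    case False
    have "\<nu> \<notin> Poly_Mapping.keys G"
    proof
      assume "\<nu> \<in> Poly_Mapping.keys G"
      then have "Poly_Mapping.keys \<nu> \<subseteq> vars G" unfolding vars_def by blast
      then show False using P False unfolding CEprop_def by blast
    qed
    then show ?thesis using False by (simp add: lookup_G0 in_keys_iff)
  qed
qed

lemma CE_G0:
  assumes W: "finite W"
  shows "CEprop f W (G0 f W)"
  unfolding CEprop_def
proof (intro conjI ballI)
  show "vars (G0 f W) \<subseteq> W"
  proof
    fix v assume "v \<in> vars (G0 f W)"
    then obtain \<nu> where "\<nu> \<in> Poly_Mapping.keys (G0 f W)" "v \<in> Poly_Mapping.keys \<nu>" unfolding vars_def by blast
    then show "v \<in> W" by (auto simp: in_keys_iff lookup_G0 split: if_splits)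
  qed
  fix \<mu> assume mu: "\<mu> \<in> Poly_Mapping.keys (f - mono_poly W * G0 f W)"
  show "\<not> ((\<exists>\<nu>. \<mu> = mlmono W + \<nu>) \<and> Poly_Mapping.keys \<mu> \<subseteq> W)"
  proof
    assume "(\<exists>\<nu>. \<mu> = mlmono W + \<nu>) \<and> Poly_Mapping.keys \<mu> \<subseteq> W"
    then obtain \<nu> where nu: "\<mu> = mlmono W + \<nu>" and k: "Poly_Mapping.keys \<mu> \<subseteq> W" by blast
    have "Poly_Mapping.keys \<nu> \<subseteq> W" using k nu W by (simp add: keys_mlmono_add)
    then have "Poly_Mapping.lookup (f - mono_poly W * G0 f W) \<mu> = 0"
      unfolding nu by (simp add: lookup_minus lookup_mono_mult lookup_G0)
    then show False using mu by (simp add: in_keys_iff)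
  qed
qed

lemma coeff_entry_G0:
  assumes "finite (P \<union> Q)"
  shows "coeff_entry f P Q = G0 f (P \<union> Q)"
  unfolding coeff_entry_CE
  by (rule the_equality) (use CE_G0[OF assms] CE_unique[OF assms] in auto)

lemma peval_Lf: "peval S p = Lf (mon S) p"
  unfolding peval_def Lf_def mon_def ..

lemma mlmono_add_diff:
  assumes W: "finite W" and k: "Poly_Mapping.keys \<mu> = W"
  shows "mlmono W + (\<mu> - mlmono W) = \<mu>"
proof (rule poly_mapping_eqI)
  fix v
  have "v \<in> W \<Longrightarrow> Poly_Mapping.lookup \<mu> v \<noteq> 0" using k by (auto simp: in_keys_iff)
  then show "Poly_Mapping.lookup (mlmono W + (\<mu> - mlmono W)) v = Poly_Mapping.lookup \<mu> v"
    using W by (auto simp: lookup_add lookup_minus lookup_mlmono)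
qed

lemma keys_diff_sub: "Poly_Mapping.keys (\<mu> - (m :: var \<Rightarrow>\<^sub>0 nat)) \<subseteq> Poly_Mapping.keys \<mu>"
  by (auto simp: in_keys_iff lookup_minus)

lemma entry_formula:
  assumes W: "finite W"
  shows "Lf (mon S) (G0 f W) = Lf (hW S W) f"
proof -
  let ?K = "{\<mu>\<in>Poly_Mapping.keys f. Poly_Mapping.keys \<mu> = W}"
  have "Lf (hW S W) f = (\<Sum>\<mu>\<in>?K. Poly_Mapping.lookup f \<mu> * mon S (\<mu> - mlmono W))"
    unfolding Lf_def hW_def
    by (rule sum.mono_neutral_cong_right) auto
  also have "\<dots> = Lf (mon S) (G0 f W)"
    unfolding Lf_def
  proof (rule sum.reindex_bij_witness[where j = "\<lambda>\<mu>. \<mu> - mlmono W" and i = "\<lambda>\<nu>. mlmono W + \<nu>"])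
    fix \<mu> assume mu: "\<mu> \<in> ?K"
    then show "mlmono W + (\<mu> - mlmono W) = \<mu>" using W mlmono_add_diff by blast
  next
    fix \<mu> assume mu: "\<mu> \<in> ?K"
    then have eq: "mlmono W + (\<mu> - mlmono W) = \<mu>" using W mlmono_add_diff by blast
    have sub: "Poly_Mapping.keys (\<mu> - mlmono W) \<subseteq> W" using mu keys_diff_sub by blast
    show "\<mu> - mlmono W \<in> Poly_Mapping.keys (G0 f W)"
      using mu sub by (auto simp: in_keys_iff lookup_G0 eq)
  next
    fix \<nu> assume nu: "\<nu> \<in> Poly_Mapping.keys (G0 f W)"
    show "mlmono W + \<nu> - mlmono W = \<nu>" by simp
  next
    fix \<nu> assume nu: "\<nu> \<in> Poly_Mapping.keys (G0 f W)"
    then have kn: "Poly_Mapping.keys \<nu> \<subseteq> W" and fnz: "Poly_Mapping.lookup f (mlmono W + \<nu>) \<noteq> 0"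
      by (auto simp: in_keys_iff lookup_G0 split: if_splits)
    show "mlmono W + \<nu> \<in> ?K" using kn fnz W by (auto simp: in_keys_iff keys_mlmono_add)
  next
    fix \<mu> assume mu: "\<mu> \<in> ?K"
    then have eq: "mlmono W + (\<mu> - mlmono W) = \<mu>" using W mlmono_add_diff by blast
    have sub: "Poly_Mapping.keys (\<mu> - mlmono W) \<subseteq> W" using mu keys_diff_sub by blast
    show "Poly_Mapping.lookup (G0 f W) (\<mu> - mlmono W) * mon S (\<mu> - mlmono W) =
          Poly_Mapping.lookup f \<mu> * mon S (\<mu> - mlmono W)"
      using sub by (simp add: lookup_G0 eq)
  qed
  finally show ?thesis by simp
qed

lemma peval_coeff_entry:
  assumes "finite (P \<union> Q)"
  shows "peval S (coeff_entry f P Q) = Lf (hW S (P \<union> Q)) f"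
  using assms by (simp add: coeff_entry_G0 peval_Lf entry_formula)



lemma keys_sub_vars: "a \<in> Poly_Mapping.keys f \<Longrightarrow> Poly_Mapping.keys a \<subseteq> vars f"
  unfolding vars_def by blast

lemma hW_add:
  assumes W: "finite W" and a: "Poly_Mapping.keys a \<subseteq> V1" and b: "Poly_Mapping.keys b \<subseteq> V2"
    and d: "V1 \<inter> V2 = {}"
  shows "hW S W (a + b) = (if W \<subseteq> V1 \<union> V2 then hW S (W \<inter> V1) a * hW S (W \<inter> V2) b else 0)"
proof (cases "W \<subseteq> V1 \<union> V2")
  case False
  have "Poly_Mapping.keys (a + b) \<noteq> W" using False a b by (auto simp: keys_add_nat)
  then show ?thesis using False by (simp add: hW_def)
next
  case True
  have iff: "(Poly_Mapping.keys (a + b) = W) \<longleftrightarrow> (Poly_Mapping.keys a = W \<inter> V1 \<and> Poly_Mapping.keys b = W \<inter> V2)"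
    using True a b d unfolding keys_add_nat by blast
  show ?thesis
  proof (cases "Poly_Mapping.keys a = W \<inter> V1 \<and> Poly_Mapping.keys b = W \<inter> V2")
    case False
    then show ?thesis using iff True by (auto simp: hW_def)
  next
    case kk: True
    have W1: "finite (W \<inter> V1)" and W2: "finite (W \<inter> V2)" using W by auto
    have eq: "a + b - mlmono W = (a - mlmono (W \<inter> V1)) + (b - mlmono (W \<inter> V2))"
    proof (rule poly_mapping_eqI)
      fix v
      show "Poly_Mapping.lookup (a + b - mlmono W) v = Poly_Mapping.lookup ((a - mlmono (W \<inter> V1)) + (b - mlmono (W \<inter> V2))) v"
      proof (cases "v \<in> W")
        case False
        then show ?thesis using W W1 W2 by (simp add: lookup_add lookup_minus lookup_mlmono)
      next
        case vW: True
        show ?thesis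
        proof (cases "v \<in> V1")
          case True
          then have "v \<notin> V2" using d by blast
          then have "Poly_Mapping.lookup b v = 0" using b by (auto simp: in_keys_iff)
          moreover have "Poly_Mapping.lookup a v \<noteq> 0" using kk vW True by (auto simp: in_keys_iff)
          ultimately show ?thesis using W W1 W2 vW True \<open>v \<notin> V2\<close> by (simp add: lookup_add lookup_minus lookup_mlmono)
        next
          case False
          then have "v \<in> V2" using vW \<open>W \<subseteq> V1 \<union> V2\<close> by blast
          have "Poly_Mapping.lookup a v = 0" using a False by (auto simp: in_keys_iff)
          moreover have "Poly_Mapping.lookup b v \<noteq> 0" using kk vW \<open>v \<in> V2\<close> by (auto simp: in_keys_iff)
          ultimately show ?thesis using W W1 W2 vW False \<open>v \<in> V2\<close> by (simp add: lookup_add lookup_minus lookup_mlmono)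
        qed
      qed
    qed
    have "hW S W (a + b) = mon S (a + b - mlmono W)" using iff kk by (simp add: hW_def)
    also have "\<dots> = mon S (a - mlmono (W \<inter> V1)) * mon S (b - mlmono (W \<inter> V2))" by (simp add: eq mon_add)
    also have "\<dots> = hW S (W \<inter> V1) a * hW S (W \<inter> V2) b" using kk by (simp add: hW_def)
    finally show ?thesis using True by simp
  qed
qed

lemma Lf_prod:
  assumes W: "finite W" and f: "vars f \<subseteq> V1" and g: "vars g \<subseteq> V2" and d: "V1 \<inter> V2 = {}"
  shows "Lf (hW S W) (f * g) = (if W \<subseteq> V1 \<union> V2 then Lf (hW S (W \<inter> V1)) f * Lf (hW S (W \<inter> V2)) g else 0)"
proof -
  have "Lf (hW S W) (f * g) = (\<Sum>a\<in>Poly_Mapping.keys f. \<Sum>b\<in>Poly_Mapping.keys g.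
      Poly_Mapping.lookup f a * Poly_Mapping.lookup g b *
      (if W \<subseteq> V1 \<union> V2 then hW S (W \<inter> V1) a * hW S (W \<inter> V2) b else 0))"
    unfolding Lf_mult
  proof (intro sum.cong refl)
    fix a b assume "a \<in> Poly_Mapping.keys f" "b \<in> Poly_Mapping.keys g"
    then have "Poly_Mapping.keys a \<subseteq> V1" "Poly_Mapping.keys b \<subseteq> V2"
      using keys_sub_vars f g by blast+
    then have h: "hW S W (a + b) = (if W \<subseteq> V1 \<union> V2 then hW S (W \<inter> V1) a * hW S (W \<inter> V2) b else 0)"
      by (intro hW_add[OF W _ _ d])
    show "Poly_Mapping.lookup f a * Poly_Mapping.lookup g b * hW S W (a + b) =
      Poly_Mapping.lookup f a * Poly_Mapping.lookup g b *
      (if W \<subseteq> V1 \<union> V2 then hW S (W \<inter> V1) a * hW S (W \<inter> V2) b else 0)"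
      by (simp only: h)
  qed
  also have "\<dots> = (if W \<subseteq> V1 \<union> V2 then Lf (hW S (W \<inter> V1)) f * Lf (hW S (W \<inter> V2)) g else 0)"
    unfolding Lf_def by (simp add: sum_product mult_ac)
  finally show ?thesis .
qed

lemma Lf_zero_outside:
  assumes f: "vars f \<subseteq> V1" and nW: "\<not> W \<subseteq> V1"
  shows "Lf (hW S W) f = 0"
  unfolding Lf_def
proof (rule sum.neutral, rule ballI)
  fix a assume "a \<in> Poly_Mapping.keys f"
  then have "Poly_Mapping.keys a \<subseteq> V1" using keys_sub_vars f by blast
  then have "Poly_Mapping.keys a \<noteq> W" using nW by blast
  then show "Poly_Mapping.lookup f a * hW S W a = 0" by (simp add: hW_def)
qed

lemma Lf_dep:
  assumes f: "vars f \<subseteq> V1" and SS: "\<And>v. v \<in> V1 \<Longrightarrow> S v = S' v"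
  shows "Lf (hW S W) f = Lf (hW S' W) f"
  unfolding Lf_def
proof (rule sum.cong[OF refl])
  fix a assume "a \<in> Poly_Mapping.keys f"
  then have ka: "Poly_Mapping.keys a \<subseteq> V1" using keys_sub_vars f by blast
  have "mon S (a - mlmono W) = mon S' (a - mlmono W)"
    unfolding mon_def
  proof (rule prod.cong[OF refl])
    fix v assume "v \<in> Poly_Mapping.keys (a - mlmono W)"
    then have "v \<in> V1" using keys_diff_sub ka by blast
    then show "S v ^ Poly_Mapping.lookup (a - mlmono W) v = S' v ^ Poly_Mapping.lookup (a - mlmono W) v"
      using SS by simp
  qed
  then show "Poly_Mapping.lookup f a * hW S W a = Poly_Mapping.lookup f a * hW S' W a"
    by (simp add: hW_def)
qed



unbundle bit_operations_syntax

lemma idx_inj: "idx x = idx y \<Longrightarrow> x = y"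
  unfolding idx_def by (rule bit_eqI) (simp add: set_eq_iff)

lemma lt_pow_iff: "(x::nat) < 2^m \<longleftrightarrow> idx x \<subseteq> {..<m}"
proof -
  have "x < 2^m \<longleftrightarrow> take_bit m x = x" by (simp add: take_bit_nat_eq_self_iff)
  also have "\<dots> \<longleftrightarrow> (\<forall>n. (n < m \<and> bit x n) = bit x n)"
    by (simp add: bit_eq_iff bit_take_bit_iff)
  also have "\<dots> \<longleftrightarrow> idx x \<subseteq> {..<m}" unfolding idx_def by auto
  finally show ?thesis .
qed

lemma idx_finite: "finite (idx x)"
proof -
  have "x < 2 ^ x" by simp
  then have "idx x \<subseteq> {..<x}" using lt_pow_iff by blast
  then show ?thesis using finite_subset by blast
qed

lemma idx_and: "idx (x AND y) = idx x \<inter> idx y"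
  unfolding idx_def by (auto simp: bit_and_iff)

lemma idx_or: "idx (x OR y) = idx x \<union> idx y"
  unfolding idx_def by (auto simp: bit_or_iff)

lemma idx_exists: "finite T \<Longrightarrow> \<exists>x. idx x = T"
proof (induction T rule: finite_induct)
  case empty
  have "idx 0 = {}" by (simp add: idx_def)
  then show ?case by blast
next
  case (insert k T)
  then obtain x where "idx x = T" by blast
  then have "idx (set_bit k x) = insert k T" unfolding idx_def by (auto simp: bit_set_bit_iff)
  then show ?case by blast
qed



unbundle bit_operations_syntax

lemma Mf_entry:
  assumes "i < 2^m" "j < 2^m"
  shows "Mf_eval m f S $$ (i,j) = Lf (hW S (Yv ` idx i \<union> Zv ` idx j)) f"
  using assms idx_finite by (simp add: Mf_eval_def peval_coeff_entry)

lemma Mf_dep: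
  assumes f: "vars f \<subseteq> V" and SS: "\<And>v. v \<in> V \<Longrightarrow> S v = S' v"
  shows "Mf_eval m f S = Mf_eval m f S'"
  by (rule eq_matI) (auto simp: Mf_eval_def peval_coeff_entry idx_finite intro!: Lf_dep[OF f SS])

lemma Mf_carrier: "Mf_eval m f S \<in> carrier_mat (2^m) (2^m)"
  by (simp add: Mf_eval_def)

lemma rank_prod:
  fixes f g :: "'a::field mpoly"
  assumes Y1: "Y1 \<subseteq> Yset m" and Y2: "Y2 \<subseteq> Yset m" and Z1: "Z1 \<subseteq> Zset m" and Z2: "Z2 \<subseteq> Zset m"
    and dY: "Y1 \<inter> Y2 = {}" and dZ: "Z1 \<inter> Z2 = {}"
    and f: "vars f \<subseteq> Y1 \<union> Z1" and g: "vars g \<subseteq> Y2 \<union> Z2"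
  shows "vec_space.rank (2^m) (Mf_eval m (f*g) S) =
         vec_space.rank (2^m) (Mf_eval m f S) * vec_space.rank (2^m) (Mf_eval m g S)"
proof -
  define N where "N = (2::nat)^m"
  define I1 where "I1 = {k. Yv k \<in> Y1}"
  define I2 where "I2 = {k. Yv k \<in> Y2}"
  define K1 where "K1 = {k. Zv k \<in> Z1}"
  define K2 where "K2 = {k. Zv k \<in> Z2}"
  have sub: "I1 \<subseteq> {..<m}" "I2 \<subseteq> {..<m}" "K1 \<subseteq> {..<m}" "K2 \<subseteq> {..<m}"
    using Y1 Y2 Z1 Z2 unfolding I1_def I2_def K1_def K2_def Yset_def Zset_def by auto
  have fins: "finite I1" "finite I2" "finite K1" "finite K2" using sub finite_subset by blast+
  obtain mI1 where mI1: "idx mI1 = I1" using idx_exists fins by blast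
  obtain mI2 where mI2: "idx mI2 = I2" using idx_exists fins by blast
  obtain mK1 where mK1: "idx mK1 = K1" using idx_exists fins by blast
  obtain mK2 where mK2: "idx mK2 = K2" using idx_exists fins by blast
  have dI: "I1 \<inter> I2 = {}" using dY unfolding I1_def I2_def by auto
  have dK: "K1 \<inter> K2 = {}" using dZ unfolding K1_def K2_def by auto
  define V1 where "V1 = Y1 \<union> Z1"
  define V2 where "V2 = Y2 \<union> Z2"
  have YZ1: "Y1 = Yv ` I1" using Y1 unfolding I1_def Yset_def by auto
  have YZ2: "Y2 = Yv ` I2" using Y2 unfolding I2_def Yset_def by auto
  have ZZ1: "Z1 = Zv ` K1" using Z1 unfolding K1_def Zset_def by auto
  have ZZ2: "Z2 = Zv ` K2" using Z2 unfolding K2_def Zset_def by auto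
  have dV: "V1 \<inter> V2 = {}" unfolding V1_def V2_def YZ1 YZ2 ZZ1 ZZ2 using dI dK by auto
  define W where "W i j = Yv ` idx i \<union> Zv ` idx j" for i j
  have Wsub1: "W i j \<subseteq> V1 \<longleftrightarrow> idx i \<subseteq> I1 \<and> idx j \<subseteq> K1" for i j
    unfolding W_def V1_def YZ1 ZZ1 by auto
  have Wsub12: "W i j \<subseteq> V1 \<union> V2 \<longleftrightarrow> idx i \<subseteq> I1 \<union> I2 \<and> idx j \<subseteq> K1 \<union> K2" for i j
    unfolding W_def V1_def V2_def YZ1 ZZ1 YZ2 ZZ2 by auto
  have Wsub2: "W i j \<subseteq> V2 \<longleftrightarrow> idx i \<subseteq> I2 \<and> idx j \<subseteq> K2" for i j
    unfolding W_def V2_def YZ2 ZZ2 by auto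
  have Wint1: "W i j \<inter> V1 = W (i AND mI1) (j AND mK1)" for i j
    unfolding W_def V1_def YZ1 ZZ1 idx_and mI1 mK1 by auto
  have Wint2: "W i j \<inter> V2 = W (i AND mI2) (j AND mK2)" for i j
    unfolding W_def V2_def YZ2 ZZ2 idx_and mI2 mK2 by auto
  have andN: "x AND y < N" if "x < N" for x y
    using that unfolding N_def lt_pow_iff idx_and by auto
  have orN: "x OR y < N" if "x < N" "y < N" for x y
    using that unfolding N_def lt_pow_iff idx_or by auto
  have finW: "finite (W i j)" for i j unfolding W_def using idx_finite by simp
  have ent: "Mf_eval m h S $$ (i,j) = Lf (hW S (W i j)) h" if "i < N" "j < N" for h :: "'a mpoly" and i j
    using Mf_entry that unfolding N_def W_def by blast
  let ?A = "Mf_eval m f S" and ?B = "Mf_eval m g S" and ?C = "Mf_eval m (f*g) S"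
  have fV: "vars f \<subseteq> V1" and gV: "vars g \<subseteq> V2" using f g unfolding V1_def V2_def .
  have "vec_space.rank N ?C = vec_space.rank N ?A * vec_space.rank N ?B"
  proof (rule kron_rank[where Ra = "\<lambda>i. idx i \<subseteq> I1" and Ka = "\<lambda>j. idx j \<subseteq> K1"
        and Rb = "\<lambda>i. idx i \<subseteq> I2" and Kb = "\<lambda>j. idx j \<subseteq> K2"
        and RC = "\<lambda>i. idx i \<subseteq> I1 \<union> I2" and CC = "\<lambda>j. idx j \<subseteq> K1 \<union> K2"
        and pa = "\<lambda>i. i AND mI1" and pb = "\<lambda>i. i AND mI2" and qa = "\<lambda>j. j AND mK1" and qb = "\<lambda>j. j AND mK2"
        and cmb = "\<lambda>a b. a OR b" and rmb = "\<lambda>a b. a OR b"])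
    show "?A \<in> carrier_mat N N" "?B \<in> carrier_mat N N" "?C \<in> carrier_mat N N"
      unfolding N_def by (rule Mf_carrier)+
  next
    fix i j assume ij: "i < N" "j < N" "?A $$ (i,j) \<noteq> 0"
    then have "W i j \<subseteq> V1" using Lf_zero_outside[OF fV] ent by metis
    then show "idx i \<subseteq> I1 \<and> idx j \<subseteq> K1" using Wsub1 by blast
  next
    fix i j assume ij: "i < N" "j < N" "?B $$ (i,j) \<noteq> 0"
    then have "W i j \<subseteq> V2" using Lf_zero_outside[OF gV] ent by metis
    then show "idx i \<subseteq> I2 \<and> idx j \<subseteq> K2" using Wsub2 by blast
  next
    fix i j assume ij: "i < N" "j < N"
    have "?C $$ (i,j) = Lf (hW S (W i j)) (f*g)" using ent ij by blast
    also have "\<dots> = (if W i j \<subseteq> V1 \<union> V2 then Lf (hW S (W i j \<inter> V1)) f * Lf (hW S (W i j \<inter> V2)) g else 0)"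
      by (rule Lf_prod[OF finW fV gV dV])
    also have "\<dots> = (if idx i \<subseteq> I1 \<union> I2 \<and> idx j \<subseteq> K1 \<union> K2
        then ?A $$ (i AND mI1, j AND mK1) * ?B $$ (i AND mI2, j AND mK2) else 0)"
      unfolding Wsub12 Wint1 Wint2 using ent andN ij by simp
    finally show "?C $$ (i,j) = (if idx i \<subseteq> I1 \<union> I2 \<and> idx j \<subseteq> K1 \<union> K2
        then ?A $$ (i AND mI1, j AND mK1) * ?B $$ (i AND mI2, j AND mK2) else 0)" .
  next
    fix i assume "i < N"
    then show "i AND mI1 < N \<and> i AND mI2 < N \<and> i AND mK1 < N \<and> i AND mK2 < N" using andN by blast
  next
    fix a b assume ab: "a < N" "b < N" "idx a \<subseteq> K1" "idx b \<subseteq> K2"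
    have "idx ((a OR b) AND mK1) = idx a" "idx ((a OR b) AND mK2) = idx b"
      unfolding idx_and idx_or mK1 mK2 using ab(3,4) dK by auto
    then show "a OR b < N \<and> idx (a OR b) \<subseteq> K1 \<union> K2 \<and> (a OR b) AND mK1 = a \<and> (a OR b) AND mK2 = b"
      using orN[OF ab(1,2)] ab(3,4) idx_inj unfolding idx_or by blast
  next
    fix a b assume ab: "a < N" "b < N" "idx a \<subseteq> I1" "idx b \<subseteq> I2"
    have "idx ((a OR b) AND mI1) = idx a" "idx ((a OR b) AND mI2) = idx b"
      unfolding idx_and idx_or mI1 mI2 using ab(3,4) dI by auto
    then show "a OR b < N \<and> idx (a OR b) \<subseteq> I1 \<union> I2 \<and> (a OR b) AND mI1 = a \<and> (a OR b) AND mI2 = b"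
      using orN[OF ab(1,2)] ab(3,4) idx_inj unfolding idx_or by blast
  qed
  then show ?thesis unfolding N_def .
qed



theorem proposition3:
  fixes m :: nat and Y1 Y2 Z1 Z2 :: "var set" and f g :: "'a::field mpoly"
  assumes "Y1 \<subseteq> Yset m" "Y2 \<subseteq> Yset m" "Z1 \<subseteq> Zset m" "Z2 \<subseteq> Zset m"
    and "Y1 \<inter> Y2 = {}" "Z1 \<inter> Z2 = {}"
    and "vars f \<subseteq> Y1 \<union> Z1" "vars g \<subseteq> Y2 \<union> Z2"
  shows "maxrank m (f * g) = maxrank m f * maxrank m g"
proof -
  define rk where "rk h S = vec_space.rank (2^m) (Mf_eval m h S)" for h :: "'a mpoly" and S
  have mr: "maxrank m h = Max {rk h S | S. True}" for h unfolding maxrank_def rk_def ..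
  have fin: "finite {rk h S | S. True}" for h
  proof (rule finite_subset[of _ "{..2^m}"])
    show "{rk h S | S. True} \<subseteq> {..2^m}"
      using vec_space.rank_le_nc[OF Mf_carrier] unfolding rk_def by auto
  qed simp
  have ne: "{rk h S | S. True} \<noteq> {}" for h by blast
  have ge: "rk h S \<le> maxrank m h" for h S unfolding mr by (rule Max_ge[OF fin]) blast
  have ex: "\<exists>S. rk h S = maxrank m h" for h
  proof -
    have "maxrank m h \<in> {rk h S | S. True}" unfolding mr by (rule Max_in[OF fin ne])
    then show ?thesis by auto
  qed
  have prod: "rk (f*g) S = rk f S * rk g S" for S
    unfolding rk_def by (rule rank_prod[OF assms])
  obtain S1 where S1: "rk f S1 = maxrank m f" using ex by blast
  obtain S2 where S2: "rk g S2 = maxrank m g" using ex by blast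
  define S where "S v = (if v \<in> Y1 \<union> Z1 then S1 v else S2 v)" for v
  have disj: "(Y1 \<union> Z1) \<inter> (Y2 \<union> Z2) = {}"
    using assms(1-6) unfolding Yset_def Zset_def by auto
  have "Mf_eval m f S = Mf_eval m f S1" by (rule Mf_dep[OF assms(7)]) (simp add: S_def)
  then have rf: "rk f S = maxrank m f" using S1 unfolding rk_def by simp
  have "Mf_eval m g S = Mf_eval m g S2" by (rule Mf_dep[OF assms(8)]) (use disj in \<open>auto simp: S_def\<close>)
  then have rg: "rk g S = maxrank m g" using S2 unfolding rk_def by simp
  have "maxrank m f * maxrank m g \<le> maxrank m (f * g)"
    using ge[of "f*g" S] prod[of S] rf rg by simp
  moreover have "maxrank m (f * g) \<le> maxrank m f * maxrank m g"
    unfolding mr[of "f*g"]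
  proof (rule Max.boundedI[OF fin ne])
    fix x assume "x \<in> {rk (f*g) S | S. True}"
    then obtain T where "x = rk (f*g) T" by blast
    then show "x \<le> maxrank m f * maxrank m g"
      using prod[of T] ge[of f T] ge[of g T] by (simp add: mult_le_mono)
  qed
  ultimately show ?thesis by simp
qed


end
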